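(* Fix integers $0\le k\le T$. Let $(\nu^k_l)_{k\le l\le T-1}$ be nonnegative numbers, let $n^k=(n^k_l)_{k\le l\le T}$ satisfy $n^k_k=0$ with independent Poisson increments $n^k_{l+1}-n^k_l$ of parameters $\nu^k_l$, independent of $\mathfrak{F}_k$, let $i^k_k\in\{-1,1\}$ be $\mathfrak{F}_k$-measurable, and let $i^k_l=-\mathbf{1}_{i^k_k=-1}+\mathbf{1}_{i^k_k=1}(\mathbf{1}_{n^k_l=0}-\mathbf{1}_{n^k_l\ge1})$ for $k\le l\le T$. Define $$q_k=\sup_{\theta}\mathbb{E}_k\Big[\sum_{\ell=k+1}^{T}\big(\mathbf{1}_{i^k_\ell=-1}-\mathbf{1}_{i^k_\ell=1}\big)\mathbf{1}_{\ell\le\theta}\Big],$$ the supremum being over stopping times $\theta$ with values in $\{k,\dots,T\}$ with respect to the filtration generated by $\mathfrak{F}_k$ and $(i^k_l)_{k\le l\le T}$. Then $q_k=q^k(k,i^k_k)$, where $q^k:\{k,\dots,T\}\times\{1,-1\}\to\mathbb{R}$ is given by $q^k(T,\pm1)=0$ and, for $k\le l<T$, $$q^k(l,-1)=T-l,$$ $$q^k(l,1)=\max\Big(0,\;e^{-\nu^k_l}\big(-1+q^k(l+1,1)\big)+\big(1-e^{-\nu^k_l}\big)\big(1+q^k(l+1,-1)\big)\Big).$$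
   Context: $\mathfrak{F}=(\mathfrak{F}_k)_{0\le k\le T}$ is a filtration on the underlying probability space and $\mathbb{E}_k$ is conditional expectation given $\mathfrak{F}_k$. $q_k$ is the value of the stylized callable range accrual (receiving $+1$ at each date $\ell$ with $i^k_\ell=-1$, paying $1$ at each date with $i^k_\ell=1$, callable at zero value) in the trader's model set up at time $k$. *)

theory Defs
  imports "HOL-Probability.Probability"
begin

definition regime :: "('a \<Rightarrow> int) \<Rightarrow> (nat \<Rightarrow> 'a \<Rightarrow> int) \<Rightarrow> nat \<Rightarrow> 'a \<Rightarrow> int" where
  "regime ik n l \<omega> =
     - (if ik \<omega> = -1 then 1 else 0)
     + (if ik \<omega> = 1 then ((if n l \<omega> = 0 then 1 else 0) - (if n l \<omega> \<ge> 1 then 1 else 0)) else 0)"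

definition gen_filt :: "'a measure \<Rightarrow> 'a measure \<Rightarrow> nat \<Rightarrow> (nat \<Rightarrow> 'a \<Rightarrow> int) \<Rightarrow> nat \<Rightarrow> 'a measure" where
  "gen_filt M Fk k i l =
     sigma (space M) (sets Fk \<union> (\<Union>m\<in>{k..l}. {i m -` A \<inter> space M | A. A \<subseteq> (UNIV :: int set)}))"

definition payoff :: "nat \<Rightarrow> nat \<Rightarrow> (nat \<Rightarrow> 'a \<Rightarrow> int) \<Rightarrow> ('a \<Rightarrow> nat) \<Rightarrow> 'a \<Rightarrow> real" where
  "payoff k T i \<theta> \<omega> =
     (\<Sum>m\<in>{k+1..T}. ((if i m \<omega> = -1 then 1 else 0) - (if i m \<omega> = 1 then 1 else 0))
                     * (if m \<le> \<theta> \<omega> then 1 else 0))"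

definition is_ess_sup :: "'a measure \<Rightarrow> ('j \<Rightarrow> 'a \<Rightarrow> real) \<Rightarrow> 'j set \<Rightarrow> ('a \<Rightarrow> real) \<Rightarrow> bool" where
  "is_ess_sup M X I Q \<longleftrightarrow>
     Q \<in> borel_measurable M \<and>
     (\<forall>j\<in>I. AE \<omega> in M. X j \<omega> \<le> Q \<omega>) \<and>
     (\<forall>Y \<in> borel_measurable M. (\<forall>j\<in>I. AE \<omega> in M. X j \<omega> \<le> Y \<omega>) \<longrightarrow> (AE \<omega> in M. Q \<omega> \<le> Y \<omega>))"

text \<open>The function q^k, indexed by d = T - l (number of remaining dates):
  qaux nu T d b = q^k(T - d, b).\<close>
fun qaux :: "(nat \<Rightarrow> real) \<Rightarrow> nat \<Rightarrow> nat \<Rightarrow> int \<Rightarrow> real" where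
  "qaux \<nu> T 0 b = 0"
| "qaux \<nu> T (Suc d) b =
     (if b = -1 then real (Suc d)
      else max 0 (exp (- \<nu> (T - Suc d)) * (-1 + qaux \<nu> T d 1)
                  + (1 - exp (- \<nu> (T - Suc d))) * (1 + qaux \<nu> T d (-1))))"

definition qfun :: "(nat \<Rightarrow> real) \<Rightarrow> nat \<Rightarrow> nat \<Rightarrow> int \<Rightarrow> real" where
  "qfun \<nu> T l b = qaux \<nu> T (T - l) b"

end

theory Submission
  imports Defs
begin

definition rg :: "int \<Rightarrow> int \<Rightarrow> int" where
  "rg a m = - (if a = -1 then 1 else 0)
     + (if a = 1 then ((if m = 0 then 1 else 0) - (if m \<ge> 1 then 1 else 0)) else 0)"

locale RA = prob_space M for M :: "'a measure" +
  fixes Fk :: "'a measure" and k T :: nat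
    and \<nu> :: "nat \<Rightarrow> real" and n :: "nat \<Rightarrow> 'a \<Rightarrow> int" and ik :: "'a \<Rightarrow> int"
  assumes SA: "subalgebra M Fk"
    and kT: "k \<le> T"
    and nupos: "\<And>l. k \<le> l \<Longrightarrow> l < T \<Longrightarrow> \<nu> l \<ge> 0"
    and nmeas: "\<And>l. k \<le> l \<Longrightarrow> l \<le> T \<Longrightarrow> n l \<in> measurable M (count_space UNIV)"
    and nk0: "\<And>\<omega>. \<omega> \<in> space M \<Longrightarrow> n k \<omega> = 0"
    and poi: "\<And>l j. k \<le> l \<Longrightarrow> l < T \<Longrightarrow>
           measure M {\<omega> \<in> space M. n (Suc l) \<omega> - n l \<omega> = int j}
             = \<nu> l ^ j / fact j * exp (- \<nu> l)"
    and ind: "indep_sets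
           (\<lambda>j. case j of None \<Rightarrow> sets Fk
                 | Some l \<Rightarrow> {(\<lambda>\<omega>. n (Suc l) \<omega> - n l \<omega>) -` A \<inter> space M | A. A \<subseteq> (UNIV :: int set)})
           (insert None (Some ` {k..<T}))"
    and ikmeas: "ik \<in> measurable Fk (count_space UNIV)"
    and ikval: "\<And>\<omega>. \<omega> \<in> space M \<Longrightarrow> ik \<omega> \<in> {-1, 1}"
begin

abbreviation "i \<equiv> regime ik n"
abbreviation "D j \<omega> \<equiv> n (Suc j) \<omega> - n j \<omega>"
abbreviation "G \<equiv> gen_filt M Fk k i"
abbreviation "E j \<equiv> (case j of None \<Rightarrow> sets Fk
                 | Some l \<Rightarrow> {(\<lambda>\<omega>. n (Suc l) \<omega> - n l \<omega>) -` A \<inter> space M | A. A \<subseteq> (UNIV :: int set)})"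

lemma spaceFk: "space Fk = space M" using SA by (simp add: subalgebra_def)
lemma setsFk: "sets Fk \<subseteq> sets M" using SA by (simp add: subalgebra_def)

lemma meas2:
  fixes f :: "'a \<Rightarrow> 'b::countable" and g :: "'a \<Rightarrow> 'c::countable"
  assumes "f \<in> measurable N (count_space UNIV)" "g \<in> measurable N (count_space UNIV)"
  shows "(\<lambda>x. h (f x) (g x) :: 'd::countable) \<in> measurable N (count_space UNIV)"
proof -
  have "(\<lambda>x. h (f x) (g x)) \<in> measurable N (count_space UNIV)"
    apply (rule measurable_compose_countable[where g=f and f="\<lambda>a x. h a (g x)"])
     apply (rule measurable_compose_countable[where g=g and f="\<lambda>b x. h a b" for a])
    using assms by auto
  then show ?thesis .
qed

lemma ikM: "ik \<in> measurable M (count_space UNIV)"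
  using measurable_from_subalg[OF SA ikmeas] .

definition "gen l = sets Fk \<union> (\<Union>m\<in>{k..l}. {i m -` A \<inter> space M | A. A \<subseteq> (UNIV :: int set)})"

lemma gen_Pow: "gen l \<subseteq> Pow (space M)"
  unfolding gen_def using sets.sets_into_space[of _ Fk] spaceFk by auto

lemma Gspace: "space (G l) = space M"
  unfolding gen_filt_def by (simp add: space_measure_of_conv)

lemma Gsets: "sets (G l) = sigma_sets (space M) (gen l)"
  unfolding gen_filt_def using gen_Pow[of l] unfolding gen_def by (simp add: sets_measure_of_conv)

lemma gen_mono: "l \<le> l' \<Longrightarrow> gen l \<subseteq> gen l'"
  unfolding gen_def by (intro Un_mono UN_mono) auto

lemma Gmono: "l \<le> l' \<Longrightarrow> sets (G l) \<subseteq> sets (G l')"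
  unfolding Gsets by (intro sigma_sets_subseteq gen_mono)

lemma Fk_G: "sets Fk \<subseteq> sets (G l)"
  using sigma_sets_superset_generator[of "gen l" "space M"] unfolding Gsets gen_def by blast

lemma i_G: assumes "k \<le> m" "m \<le> l" shows "i m \<in> measurable (G l) (count_space UNIV)"
proof -
  have "i m -` {a} \<inter> space M \<in> gen l" for a
    unfolding gen_def using assms by (intro UnI2 UN_I[of m]) auto
  then show ?thesis
  proof (subst measurable_count_space_eq2_countable, intro conjI ballI)
    show "i m \<in> space (G l) \<rightarrow> UNIV" by simp
    fix a assume "\<And>a. i m -` {a} \<inter> space M \<in> gen l"
    then show "i m -` {a} \<inter> space (G l) \<in> sets (G l)" unfolding Gspace Gsets
      by (rule sigma_sets.Basic)
  qed
qed

lemma regime_eq: "regime ik n l \<omega> = rg (ik \<omega>) (n l \<omega>)"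
  unfolding regime_def rg_def by simp

lemma n_meas_gen:
  assumes ikm: "ik \<in> measurable N (count_space UNIV)" and sp: "space N = space M"
    and Dm: "\<And>j. k \<le> j \<Longrightarrow> j < l \<Longrightarrow> D j \<in> measurable N (count_space UNIV)"
    and "k \<le> m" "m \<le> l"
  shows "n m \<in> measurable N (count_space UNIV)"
  using assms(4,5)
proof (induction m rule: dec_induct)
  case base
  have "(\<lambda>x. 0::int) \<in> measurable N (count_space UNIV)" by simp
  then show ?case by (rule measurable_cong[THEN iffD1, rotated]) (simp add: sp nk0)
next
  case (step m)
  have "(\<lambda>x. n m x + D m x) \<in> measurable N (count_space UNIV)"
    using meas2[OF step.IH Dm[of m], where h="(+)"] step by auto
  then show ?case by simp
qed

lemma i_meas_gen:
  assumes ikm: "ik \<in> measurable N (count_space UNIV)" and sp: "space N = space M"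
    and Dm: "\<And>j. k \<le> j \<Longrightarrow> j < l \<Longrightarrow> D j \<in> measurable N (count_space UNIV)"
    and "k \<le> m" "m \<le> l"
  shows "i m \<in> measurable N (count_space UNIV)"
  unfolding regime_eq using meas2[OF ikm n_meas_gen[OF assms], where h=rg] by simp

lemma D_M: assumes "k \<le> j" "j < T" shows "D j \<in> measurable M (count_space UNIV)"
proof -
  have a: "n (Suc j) \<in> measurable M (count_space UNIV)" "n j \<in> measurable M (count_space UNIV)"
    using assms by (auto intro: nmeas)
  show ?thesis using meas2[OF a, where h="(-)"] .
qed

lemma i_M: "k \<le> m \<Longrightarrow> m \<le> T \<Longrightarrow> i m \<in> measurable M (count_space UNIV)"
  by (rule i_meas_gen[OF ikM refl D_M, of T])

lemma gen_M: assumes "l \<le> T" shows "gen l \<subseteq> sets M"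
proof -
  have "i m -` A \<inter> space M \<in> sets M" if "k \<le> m" "m \<le> T" for m A
    using measurable_sets[OF i_M[OF that], of A] by simp
  then show ?thesis using setsFk assms unfolding gen_def by auto
qed

lemma G_sub: "l \<le> T \<Longrightarrow> subalgebra M (G l)"
  unfolding subalgebra_def Gspace Gsets
  using gen_M by (simp add: sets.sigma_sets_subset)

definition "H l = sigma_sets (space M) (\<Union>j\<in>insert None (Some ` {k..<l}). E j)"

lemma E_Pow: "E j \<subseteq> Pow (space M)"
  using sets.sets_into_space[of _ Fk] spaceFk by (auto split: option.splits)

lemma G_H: assumes "l \<le> T" shows "sets (G l) \<subseteq> H l"
proof -
  define Hm where "Hm = sigma (space M) (\<Union>j\<in>insert None (Some ` {k..<l}). E j)"
  have HP: "(\<Union>j\<in>insert None (Some ` {k..<l}). E j) \<subseteq> Pow (space M)" using E_Pow by blast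
  have sHm: "sets Hm = H l" unfolding Hm_def H_def using HP by (simp add: sets_measure_of_conv)
  have spHm: "space Hm = space M" unfolding Hm_def by (simp add: space_measure_of_conv)
  have gens: "(\<Union>j\<in>insert None (Some ` {k..<l}). E j) \<subseteq> sets Hm"
    unfolding sHm H_def by (rule sigma_sets_superset_generator)
  have ikH: "ik \<in> measurable Hm (count_space UNIV)"
    unfolding measurable_count_space_eq2_countable spHm
  proof safe
    fix a
    have "ik -` {a} \<inter> space M \<in> sets Fk" using ikmeas spaceFk
      by (metis measurable_sets sets_count_space UNIV_I Pow_UNIV)
    then show "ik -` {a} \<inter> space M \<in> sets Hm" using gens by auto
  qed simp
  have DH: "D j \<in> measurable Hm (count_space UNIV)" if "k \<le> j" "j < l" for j
    unfolding measurable_count_space_eq2_countable spHm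
  proof safe
    fix a
    have "D j -` {a} \<inter> space M \<in> E (Some j)" by auto
    then show "D j -` {a} \<inter> space M \<in> sets Hm" using gens that by force
  qed simp
  have "gen l \<subseteq> sets Hm"
  proof
    fix x assume "x \<in> gen l"
    then consider "x \<in> sets Fk" | m A where "k \<le> m" "m \<le> l" "x = i m -` A \<inter> space M"
      unfolding gen_def by auto
    then show "x \<in> sets Hm"
    proof cases
      case 1 then show ?thesis using gens by auto
    next
      case 2
      have "i m \<in> measurable Hm (count_space UNIV)"
        by (rule i_meas_gen[OF ikH spHm DH]) (use 2 in auto)
      then show ?thesis unfolding 2 spHm[symmetric] by (auto intro: measurable_sets)
    qed
  qed
  then show ?thesis unfolding Gsets sHm[symmetric]
    by (rule sets.sigma_sets_subset') (metis spHm sets.top)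
qed

lemma indepH: assumes "k \<le> l" "l < T" "a \<in> H l" "b \<in> E (Some l)"
  shows "prob (a \<inter> b) = prob a * prob b"
proof -
  define I where "I = case_bool (insert None (Some ` {k..<l})) {Some l}"
  have sub: "(\<Union>j. I j) \<subseteq> insert None (Some ` {k..<T})"
    unfolding I_def using assms by (auto split: bool.splits)
  have i1: "indep_sets E (\<Union>j. I j)"
    by (rule indep_sets_mono_index[OF sub ind])
  have IS: "Int_stable (E x)" for x
  proof (cases x)
    case None then show ?thesis by (auto simp: Int_stable_def)
  next
    case (Some l')
    show ?thesis unfolding Some Int_stable_def
    proof (clarsimp)
      fix A B :: "int set"
      have "(D l' -` A \<inter> space M) \<inter> (D l' -` B \<inter> space M) = D l' -` (A \<inter> B) \<inter> space M" by auto
      then show "\<exists>C. D l' -` A \<inter> space M \<inter> (D l' -` B \<inter> space M) = D l' -` C \<inter> space M" by blast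
    qed
  qed
  have dj: "disjoint_family_on I UNIV"
    unfolding disjoint_family_on_def I_def by (auto split: bool.splits)
  have i2: "indep_sets (\<lambda>j. sigma_sets (space M) (\<Union>x\<in>I j. E x)) UNIV"
    by (rule indep_sets_collect_sigma[OF i1 IS dj])
  have aa: "a \<in> sigma_sets (space M) (\<Union>x\<in>I True. E x)" using assms(3) unfolding H_def I_def by simp
  have bb: "b \<in> sigma_sets (space M) (\<Union>x\<in>I False. E x)" using assms(4) unfolding I_def
    by (auto intro: sigma_sets.Basic)
  have "prob (\<Inter>j\<in>UNIV. case_bool a b j) = (\<Prod>j\<in>UNIV. prob (case_bool a b j))"
    by (rule indep_setsD[OF i2]) (use aa bb in \<open>auto split: bool.splits\<close>)
  then show ?thesis by (simp add: UNIV_bool Int_commute)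
qed

lemma Dset_M: "k \<le> l \<Longrightarrow> l < T \<Longrightarrow> {\<omega> \<in> space M. P (D l \<omega>)} \<in> events"
proof -
  assume a: "k \<le> l" "l < T"
  have "{\<omega> \<in> space M. P (D l \<omega>)} = D l -` {x. P x} \<inter> space M" by auto
  also have "\<dots> \<in> events" using measurable_sets[OF D_M[OF a], of "{x. P x}"] by simp
  finally show ?thesis .
qed

lemma Dset_E: "{\<omega> \<in> space M. P (D l \<omega>)} \<in> E (Some l)"
proof -
  have "{\<omega> \<in> space M. P (D l \<omega>)} = D l -` {x. P x} \<inter> space M" by auto
  then have "\<exists>A. {\<omega> \<in> space M. P (D l \<omega>)} = D l -` A \<inter> space M \<and> A \<subseteq> UNIV" by blast
  then show ?thesis by simp
qed

lemma prob_D0: "k \<le> l \<Longrightarrow> l < T \<Longrightarrow> prob {\<omega> \<in> space M. D l \<omega> = 0} = exp (- \<nu> l)"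
  using poi[of l 0] by simp

lemma prob_Dnn: assumes "k \<le> l" "l < T" shows "prob {\<omega> \<in> space M. D l \<omega> \<ge> 0} = 1"
proof -
  define A where "A j = {\<omega> \<in> space M. D l \<omega> = int j}" for j
  have r: "range A \<subseteq> events" unfolding A_def using Dset_M[OF assms] by auto
  have d: "disjoint_family A" unfolding A_def disjoint_family_on_def by auto
  have U: "(\<Union>j. A j) = {\<omega> \<in> space M. D l \<omega> \<ge> 0}"
    unfolding A_def by auto (metis diff_ge_0_iff_ge nonneg_int_cases)
  have s1: "(\<lambda>j. prob (A j)) sums prob {\<omega> \<in> space M. D l \<omega> \<ge> 0}"
    using finite_measure_UNION[OF r d] U by simp
  have "(\<lambda>j. \<nu> l ^ j /\<^sub>R fact j) sums exp (\<nu> l)" by (rule exp_converges)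
  then have "(\<lambda>j. (\<nu> l ^ j /\<^sub>R fact j) * exp (- \<nu> l)) sums (exp (\<nu> l) * exp (- \<nu> l))"
    by (rule sums_mult2)
  then have s2: "(\<lambda>j. prob (A j)) sums 1"
    unfolding A_def using poi[OF assms] by (simp add: exp_minus_inverse divide_inverse_commute)
  show ?thesis using sums_unique2[OF s1 s2] .
qed

definition "Good \<omega> \<longleftrightarrow> (\<forall>j\<in>{k..<T}. D j \<omega> \<ge> 0)"

lemma AE_Good: "AE \<omega> in M. Good \<omega>"
  unfolding Good_def
proof (rule AE_finite_allI)
  fix j assume "j \<in> {k..<T}"
  then have "AE \<omega> in M. \<omega> \<in> {\<omega> \<in> space M. D j \<omega> \<ge> 0}"
    by (intro AE_prob_1 prob_Dnn) auto
  then show "AE \<omega> in M. D j \<omega> \<ge> 0" by auto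
qed simp

lemma n_nn: assumes "\<omega> \<in> space M" "Good \<omega>" "k \<le> m" "m \<le> T" shows "n m \<omega> \<ge> 0"
  using assms(3,4)
proof (induction m rule: dec_induct)
  case base then show ?case using nk0[OF assms(1)] by simp
next
  case (step m)
  then have "D m \<omega> \<ge> 0" using assms(2) unfolding Good_def by auto
  then show ?case using step by simp
qed

lemma i_k: "\<omega> \<in> space M \<Longrightarrow> i k \<omega> = ik \<omega>"
  using ikval[of \<omega>] nk0[of \<omega>] unfolding regime_def by auto

lemma i_val: assumes "\<omega> \<in> space M" "Good \<omega>" "k \<le> m" "m \<le> T" shows "i m \<omega> = 1 \<or> i m \<omega> = -1"
  using n_nn[OF assms] ikval[OF assms(1)] unfolding regime_def by auto

lemma i_step: assumes "\<omega> \<in> space M" "Good \<omega>" "k \<le> m" "m < T"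
  shows "i (Suc m) \<omega> = (if i m \<omega> = 1 \<and> D m \<omega> = 0 then 1 else -1)"
proof -
  have a: "n m \<omega> \<ge> 0" using n_nn[OF assms(1,2,3)] assms by simp
  have b: "D m \<omega> \<ge> 0" using assms unfolding Good_def by auto
  show ?thesis using a b ikval[OF assms(1)] unfolding regime_def by auto
qed

lemma lin_int: assumes "A \<in> events" "X \<in> events"
  shows "(\<integral>\<omega>. c1 * indicator A \<omega> + c2 * indicator X \<omega> \<partial>M) = c1 * prob A + c2 * prob X"
  using assms by (subst Bochner_Integration.integral_add) (auto simp: Int_absorb2 emeasure_eq_measure)

lemma gi_meas: "k \<le> m \<Longrightarrow> m \<le> T \<Longrightarrow> (\<lambda>\<omega>. (g :: int \<Rightarrow> real) (i m \<omega>)) \<in> borel_measurable M"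
  using measurable_compose[OF i_M, of m "g" borel] by auto

lemma Gev: "l \<le> T \<Longrightarrow> B \<in> sets (G l) \<Longrightarrow> B \<in> events"
  using G_sub[of l] unfolding subalgebra_def by auto

lemma iset_G: "k \<le> m \<Longrightarrow> m \<le> l \<Longrightarrow> {\<omega> \<in> space M. P (i m \<omega>)} \<in> sets (G l)"
proof -
  assume a: "k \<le> m" "m \<le> l"
  have "{\<omega> \<in> space M. P (i m \<omega>)} = i m -` {x. P x} \<inter> space (G l)" by (auto simp: Gspace)
  also have "\<dots> \<in> sets (G l)" using measurable_sets[OF i_G[OF a], of "{x. P x}"] by simp
  finally show ?thesis .
qed

lemma key: assumes "k \<le> l" "l < T" "B \<in> sets (G l)"
  shows "(\<integral>\<omega>. indicator B \<omega> * g (i (Suc l) \<omega>) \<partial>M)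
       = (\<integral>\<omega>. indicator B \<omega> * (if i l \<omega> = -1 then g (-1) else g (-1) + exp (- \<nu> l) * (g 1 - g (-1))) \<partial>M)"
proof -
  define C where "C = {\<omega> \<in> space M. i l \<omega> = 1}"
  define Ev where "Ev = {\<omega> \<in> space M. D l \<omega> = 0}"
  have BG: "B \<in> sets (G l)" by fact
  have CG: "C \<in> sets (G l)" unfolding C_def using assms by (intro iset_G) auto
  have BCG: "B \<inter> C \<in> sets (G l)" using BG CG by auto
  have BM: "B \<in> events" using Gev[of l B] assms by simp
  have BCM: "B \<inter> C \<in> events" using Gev[OF _ BCG] assms by simp
  have EvM: "Ev \<in> events" unfolding Ev_def by (rule Dset_M[OF assms(1,2)])
  have BCEM: "B \<inter> C \<inter> Ev \<in> events" using BCM EvM by auto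
  have BCH: "B \<inter> C \<in> H l" using G_H[of l] assms BCG by auto
  have EvE: "Ev \<in> E (Some l)" unfolding Ev_def by (rule Dset_E)
  have pind: "prob (B \<inter> C \<inter> Ev) = prob (B \<inter> C) * exp (- \<nu> l)"
    using indepH[OF assms(1,2) BCH EvE] prob_D0[OF assms(1,2)] unfolding Ev_def by simp
  have Bsp: "B \<subseteq> space M" using BM sets.sets_into_space by auto
  have m1: "(\<lambda>\<omega>. indicator B \<omega> * g (i (Suc l) \<omega>)) \<in> borel_measurable M"
    using gi_meas[of "Suc l" g] BM assms by auto
  have m2: "(\<lambda>\<omega>. indicator B \<omega> * (if i l \<omega> = -1 then g (-1) else g (-1) + exp (- \<nu> l) * (g 1 - g (-1)))) \<in> borel_measurable M"
    using gi_meas[of l "\<lambda>b. if b = -1 then g (-1) else g (-1) + exp (- \<nu> l) * (g 1 - g (-1))"] BM assms by auto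
  have "(\<integral>\<omega>. indicator B \<omega> * g (i (Suc l) \<omega>) \<partial>M)
      = (\<integral>\<omega>. g (-1) * indicator B \<omega> + (g 1 - g (-1)) * indicator (B \<inter> C \<inter> Ev) \<omega> \<partial>M)"
  proof (rule integral_cong_AE[OF m1])
    show "(\<lambda>\<omega>. g (-1) * indicator B \<omega> + (g 1 - g (-1)) * indicator (B \<inter> C \<inter> Ev) \<omega>) \<in> borel_measurable M"
      using BM BCEM by auto
    show "AE \<omega> in M. indicator B \<omega> * g (i (Suc l) \<omega>) = g (-1) * indicator B \<omega> + (g 1 - g (-1)) * indicator (B \<inter> C \<inter> Ev) \<omega>"
      using AE_Good
    proof (rule AE_mp, intro AE_I2 impI)
      fix \<omega> assume \<omega>: "\<omega> \<in> space M" "Good \<omega>"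
      show "indicator B \<omega> * g (i (Suc l) \<omega>) = g (-1) * indicator B \<omega> + (g 1 - g (-1)) * indicator (B \<inter> C \<inter> Ev) \<omega>"
        using i_step[OF \<omega> assms(1,2)] \<omega>(1) unfolding C_def Ev_def
        by (auto simp: indicator_def)
    qed
  qed
  also have "\<dots> = g (-1) * prob B + (g 1 - g (-1)) * prob (B \<inter> C \<inter> Ev)"
    by (rule lin_int[OF BM BCEM])
  also have "\<dots> = g (-1) * prob B + (exp (- \<nu> l) * (g 1 - g (-1))) * prob (B \<inter> C)"
    using pind by simp
  also have "\<dots> = (\<integral>\<omega>. g (-1) * indicator B \<omega> + (exp (- \<nu> l) * (g 1 - g (-1))) * indicator (B \<inter> C) \<omega> \<partial>M)"
    by (rule lin_int[OF BM BCM, symmetric])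
  also have "\<dots> = (\<integral>\<omega>. indicator B \<omega> * (if i l \<omega> = -1 then g (-1) else g (-1) + exp (- \<nu> l) * (g 1 - g (-1))) \<partial>M)"
  proof (rule integral_cong_AE[OF _ m2])
    show "(\<lambda>\<omega>. g (-1) * indicator B \<omega> + (exp (- \<nu> l) * (g 1 - g (-1))) * indicator (B \<inter> C) \<omega>) \<in> borel_measurable M"
      using BM BCM by auto
    show "AE \<omega> in M. g (-1) * indicator B \<omega> + (exp (- \<nu> l) * (g 1 - g (-1))) * indicator (B \<inter> C) \<omega> = indicator B \<omega> * (if i l \<omega> = -1 then g (-1) else g (-1) + exp (- \<nu> l) * (g 1 - g (-1)))"
      using AE_Good
    proof (rule AE_mp, intro AE_I2 impI)
      fix \<omega> assume \<omega>: "\<omega> \<in> space M" "Good \<omega>"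
      show "g (-1) * indicator B \<omega> + (exp (- \<nu> l) * (g 1 - g (-1))) * indicator (B \<inter> C) \<omega> = indicator B \<omega> * (if i l \<omega> = -1 then g (-1) else g (-1) + exp (- \<nu> l) * (g 1 - g (-1)))"
        using i_val[OF \<omega>, of l] assms \<omega>(1) unfolding C_def
        by (auto simp: indicator_def)
    qed
  qed
  finally show ?thesis .
qed

definition hh :: "int \<Rightarrow> real" where "hh b = (if b = -1 then 1 else 0) - (if b = 1 then 1 else 0)"

definition "S \<theta> l \<omega> = (\<Sum>m\<in>{Suc l..T}. hh (i m \<omega>) * (if m \<le> \<theta> \<omega> then 1 else 0))"

lemma payoff_S: "payoff k T i \<theta> \<omega> = S \<theta> k \<omega>"
  unfolding payoff_def S_def hh_def by simp

abbreviation "q l b \<equiv> qfun \<nu> T l b"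

lemma q_T: "q T b = 0" unfolding qfun_def by simp

lemma q_m1: "l \<le> T \<Longrightarrow> q l (-1) = real (T - l)"
  unfolding qfun_def by (cases "T - l") auto

lemma q_step: assumes "l < T"
  shows "q l b = (if b = -1 then real (T - l) else max 0 (exp (- \<nu> l) * (-1 + q (Suc l) 1)
                  + (1 - exp (- \<nu> l)) * (1 + q (Suc l) (-1))))"
proof -
  have "T - l = Suc (T - Suc l)" "T - Suc (T - Suc l) = l" using assms by auto
  then show ?thesis unfolding qfun_def by simp
qed

lemma q_nn: "q l b \<ge> 0"
  unfolding qfun_def by (cases "T - l") auto

definition contv :: "nat \<Rightarrow> int \<Rightarrow> real" where "contv l b = (let g = (\<lambda>b. hh b + q (Suc l) b) in
   if b = -1 then g (-1) else g (-1) + exp (- \<nu> l) * (g 1 - g (-1)))"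

lemma cont_le: assumes "l < T" shows "contv l b \<le> q l b"
proof -
  have m1: "q (Suc l) (-1) = real (T - Suc l)" using assms by (intro q_m1) auto
  show ?thesis
  proof (cases "b = -1")
    case True then show ?thesis using m1 assms unfolding contv_def q_step[OF assms] hh_def
      by (simp add: of_nat_diff)
  next
    case False
    have "contv l b = exp (- \<nu> l) * (-1 + q (Suc l) 1) + (1 - exp (- \<nu> l)) * (1 + q (Suc l) (-1))"
      using False unfolding contv_def hh_def by (simp add: algebra_simps)
    also have "\<dots> \<le> q l b" unfolding q_step[OF assms] using False by simp
    finally show ?thesis .
  qed
qed

lemma cont_eq: assumes "l < T" "q l b \<noteq> 0" shows "contv l b = q l b"
proof -
  have m1: "q (Suc l) (-1) = real (T - Suc l)" using assms by (intro q_m1) auto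
  show ?thesis
  proof (cases "b = -1")
    case True then show ?thesis using m1 assms unfolding contv_def q_step[OF assms(1)] hh_def
      by (simp add: of_nat_diff)
  next
    case False
    have "contv l b = exp (- \<nu> l) * (-1 + q (Suc l) 1) + (1 - exp (- \<nu> l)) * (1 + q (Suc l) (-1))"
      using False unfolding contv_def hh_def by (simp add: algebra_simps)
    also have "\<dots> = q l b" using assms(2) unfolding q_step[OF assms(1)] using False
      by (auto simp: max_def split: if_splits)
    finally show ?thesis .
  qed
qed

lemma contv_b: "\<bar>contv l b\<bar> \<le> \<bar>contv l (-1)\<bar> + \<bar>contv l 1\<bar>"
proof -
  have "contv l b = contv l (-1) \<or> contv l b = contv l 1" unfolding contv_def Let_def by auto
  then show ?thesis by auto
qed

lemma key2: assumes "k \<le> l" "l < T" "B \<in> sets (G l)"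
  shows "(\<integral>\<omega>. indicator B \<omega> * (hh (i (Suc l) \<omega>) + q (Suc l) (i (Suc l) \<omega>)) \<partial>M)
       = (\<integral>\<omega>. indicator B \<omega> * contv l (i l \<omega>) \<partial>M)"
  using key[OF assms, of "\<lambda>b. hh b + q (Suc l) b"] unfolding contv_def Let_def by simp

lemma intb: fixes f :: "'a \<Rightarrow> real" shows "f \<in> borel_measurable M \<Longrightarrow> (\<And>\<omega>. \<omega> \<in> space M \<Longrightarrow> \<bar>f \<omega>\<bar> \<le> c) \<Longrightarrow> integrable M f"
  by (rule integrable_const_bound[where B=c]) auto

lemma hh_b: "\<bar>hh b\<bar> \<le> 1" unfolding hh_def by auto

lemma q_b: "\<bar>q l b\<bar> \<le> \<bar>q l (-1)\<bar> + \<bar>q l 1\<bar>"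
proof -
  have "q l b = q l (-1) \<or> q l b = q l 1" unfolding qfun_def by (cases "T - l") auto
  then show ?thesis by auto
qed

lemma ind_b: "\<bar>indicator B \<omega> * (x::real)\<bar> \<le> \<bar>x\<bar>" by (auto simp: indicator_def)

lemma S_b: "\<bar>S \<theta> l \<omega>\<bar> \<le> real T"
proof -
  have "\<bar>S \<theta> l \<omega>\<bar> \<le> (\<Sum>m\<in>{Suc l..T}. \<bar>hh (i m \<omega>) * (if m \<le> \<theta> \<omega> then 1 else 0)\<bar>)"
    unfolding S_def by (rule sum_abs)
  also have "\<dots> \<le> (\<Sum>m\<in>{Suc l..T}. 1)" using hh_b by (intro sum_mono) auto
  also have "\<dots> \<le> real T" by simp
  finally show ?thesis .
qed

context
  fixes \<theta> :: "'a \<Rightarrow> nat"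
  assumes st: "stopping_time G \<theta>" and rng: "\<forall>\<omega>\<in>space M. \<theta> \<omega> \<in> {k..T}"
begin

lemma th_le: "Measurable.pred M (\<lambda>\<omega>. \<theta> \<omega> \<le> t)"
proof (cases "t \<le> T")
  case True
  have "Measurable.pred (G t) (\<lambda>\<omega>. \<theta> \<omega> \<le> t)" using stopping_timeD[OF st] .
  then show ?thesis using Gev[OF True] unfolding Measurable.pred_def Gspace by blast
next
  case False
  then have "{\<omega> \<in> space M. \<theta> \<omega> \<le> t} = space M" using rng by auto
  then show ?thesis unfolding Measurable.pred_def by simp
qed

lemma th_ge: "Measurable.pred M (\<lambda>\<omega>. m \<le> \<theta> \<omega>)"
proof (cases m)
  case 0 then show ?thesis by simp
next
  case (Suc m')
  have "(\<lambda>\<omega>. m \<le> \<theta> \<omega>) = (\<lambda>\<omega>. \<not> \<theta> \<omega> \<le> m')" using Suc by auto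
  then show ?thesis using th_le[of m'] by (simp add: pred_intros_logic)
qed

lemma S_meas: "k \<le> l \<Longrightarrow> S \<theta> l \<in> borel_measurable M"
proof -
  assume kl: "k \<le> l"
  have "(\<lambda>\<omega>. hh (i m \<omega>) * (if m \<le> \<theta> \<omega> then 1 else 0)) \<in> borel_measurable M" if "m \<in> {Suc l..T}" for m
  proof -
    have a: "(\<lambda>\<omega>. hh (i m \<omega>)) \<in> borel_measurable M" using gi_meas that kl by auto
    have b: "(\<lambda>\<omega>. if m \<le> \<theta> \<omega> then 1 else (0::real)) \<in> borel_measurable M"
      using th_ge[of m] by (intro measurable_If) auto
    show ?thesis using a b by (rule borel_measurable_times)
  qed
  then show ?thesis unfolding S_def by (intro borel_measurable_sum) auto
qed

lemma integ_ind_fi: "k \<le> m \<Longrightarrow> m \<le> T \<Longrightarrow> B \<in> events \<Longrightarrow> (\<And>b. \<bar>f b\<bar> \<le> c) \<Longrightarrow>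
   integrable M (\<lambda>\<omega>. indicator B \<omega> * (f :: int \<Rightarrow> real) (i m \<omega>))"
  by (rule intb[where c=c]) (auto intro!: borel_measurable_times gi_meas intro: order_trans[OF ind_b])

lemma integ_ind_q: "k \<le> m \<Longrightarrow> m \<le> T \<Longrightarrow> B \<in> events \<Longrightarrow>
   integrable M (\<lambda>\<omega>. indicator B \<omega> * q l (i m \<omega>))"
  by (rule integ_ind_fi[where c="\<bar>q l (-1)\<bar> + \<bar>q l 1\<bar>"]) (auto intro: q_b)

lemma integ_ind_hh: "k \<le> m \<Longrightarrow> m \<le> T \<Longrightarrow> B \<in> events \<Longrightarrow>
   integrable M (\<lambda>\<omega>. indicator B \<omega> * hh (i m \<omega>))"
  by (rule integ_ind_fi[where c=1]) (auto intro: hh_b)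

lemma integ_ind_S: "k \<le> l \<Longrightarrow> B \<in> events \<Longrightarrow>
   integrable M (\<lambda>\<omega>. indicator B \<omega> * S \<theta> l \<omega>)"
  by (rule intb[where c="real T"]) (auto intro!: borel_measurable_times S_meas intro: order_trans[OF ind_b S_b])

lemma B2_G: assumes "B \<in> sets (G l)" shows "B \<inter> {\<omega> \<in> space M. l < \<theta> \<omega>} \<in> sets (G l)"
proof -
  have "{\<omega> \<in> space M. l < \<theta> \<omega>} \<in> sets (G l)"
    using stopping_timeD2[OF st, of l] unfolding Measurable.pred_def Gspace .
  then show ?thesis using assms by auto
qed

lemma S_split: assumes "l < T" "B \<subseteq> space M" "\<forall>\<omega>\<in>B. l \<le> \<theta> \<omega>"
  shows "indicator B \<omega> * S \<theta> l \<omega> = indicator (B \<inter> {\<omega> \<in> space M. l < \<theta> \<omega>}) \<omega> * hh (i (Suc l) \<omega>)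
     + indicator (B \<inter> {\<omega> \<in> space M. l < \<theta> \<omega>}) \<omega> * S \<theta> (Suc l) \<omega>"
proof (cases "\<omega> \<in> B")
  case False then show ?thesis by simp
next
  case True
  show ?thesis
  proof (cases "l < \<theta> \<omega>")
    case True2: True
    have "S \<theta> l \<omega> = hh (i (Suc l) \<omega>) + S \<theta> (Suc l) \<omega>"
      unfolding S_def using assms(1) True2 by (subst sum.atLeast_Suc_atMost) auto
    then show ?thesis using True True2 assms(2) by auto
  next
    case False
    then have "\<theta> \<omega> = l" using assms(3) True by force
    then have "S \<theta> l \<omega> = 0" unfolding S_def by (intro sum.neutral) auto
    then show ?thesis using False by simp
  qed
qed

lemma upper:
  "d \<le> T - k \<Longrightarrow> B \<in> sets (G (T - d)) \<Longrightarrow> \<forall>\<omega>\<in>B. T - d \<le> \<theta> \<omega> \<Longrightarrow>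
   (\<integral>\<omega>. indicator B \<omega> * S \<theta> (T - d) \<omega> \<partial>M) \<le> (\<integral>\<omega>. indicator B \<omega> * q (T - d) (i (T - d) \<omega>) \<partial>M)"
proof (induction d arbitrary: B)
  case 0
  have "S \<theta> T \<omega> = 0" for \<omega> unfolding S_def by simp
  then show ?case by (simp add: q_T)
next
  case (Suc d)
  define l where "l = T - Suc d"
  have l: "k \<le> l" "l < T" "Suc l = T - d" using Suc.prems(1) unfolding l_def by auto
  have BG: "B \<in> sets (G l)" using Suc.prems(2) l_def by simp
  have Bth: "\<forall>\<omega>\<in>B. l \<le> \<theta> \<omega>" using Suc.prems(3) l_def by simp
  have Bsp: "B \<subseteq> space M" using sets.sets_into_space[OF BG] Gspace by simp
  define B2 where "B2 = B \<inter> {\<omega> \<in> space M. l < \<theta> \<omega>}"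
  have B2G: "B2 \<in> sets (G l)" unfolding B2_def by (rule B2_G[OF BG])
  have B2G1: "B2 \<in> sets (G (T - d))" using Gmono[of l "T - d"] B2G l by auto
  have B2M: "B2 \<in> events" using Gev[OF _ B2G] l by simp
  have BM: "B \<in> events" using Gev[OF _ BG] l by simp
  have B2th: "\<forall>\<omega>\<in>B2. T - d \<le> \<theta> \<omega>" unfolding B2_def using l by auto
  have IH: "(\<integral>\<omega>. indicator B2 \<omega> * S \<theta> (Suc l) \<omega> \<partial>M) \<le> (\<integral>\<omega>. indicator B2 \<omega> * q (Suc l) (i (Suc l) \<omega>) \<partial>M)"
    using Suc.IH[OF _ B2G1 B2th] Suc.prems(1) l(3) by simp
  have "(\<integral>\<omega>. indicator B \<omega> * S \<theta> l \<omega> \<partial>M)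
      = (\<integral>\<omega>. indicator B2 \<omega> * hh (i (Suc l) \<omega>) + indicator B2 \<omega> * S \<theta> (Suc l) \<omega> \<partial>M)"
    unfolding B2_def using S_split[OF l(2) Bsp Bth] by simp
  also have "\<dots> = (\<integral>\<omega>. indicator B2 \<omega> * hh (i (Suc l) \<omega>) \<partial>M) + (\<integral>\<omega>. indicator B2 \<omega> * S \<theta> (Suc l) \<omega> \<partial>M)"
    using l B2M by (intro Bochner_Integration.integral_add integ_ind_hh integ_ind_S) auto
  also have "\<dots> \<le> (\<integral>\<omega>. indicator B2 \<omega> * hh (i (Suc l) \<omega>) \<partial>M) + (\<integral>\<omega>. indicator B2 \<omega> * q (Suc l) (i (Suc l) \<omega>) \<partial>M)"
    using IH by simp
  also have "\<dots> = (\<integral>\<omega>. indicator B2 \<omega> * hh (i (Suc l) \<omega>) + indicator B2 \<omega> * q (Suc l) (i (Suc l) \<omega>) \<partial>M)"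
    using l B2M by (intro Bochner_Integration.integral_add[symmetric] integ_ind_hh integ_ind_q) auto
  also have "\<dots> = (\<integral>\<omega>. indicator B2 \<omega> * (hh (i (Suc l) \<omega>) + q (Suc l) (i (Suc l) \<omega>)) \<partial>M)"
    by (simp add: distrib_left)
  also have "\<dots> = (\<integral>\<omega>. indicator B2 \<omega> * contv l (i l \<omega>) \<partial>M)"
    by (rule key2[OF l(1,2) B2G])
  also have "\<dots> \<le> (\<integral>\<omega>. indicator B \<omega> * q l (i l \<omega>) \<partial>M)"
  proof (rule integral_mono)
    show "integrable M (\<lambda>\<omega>. indicator B2 \<omega> * contv l (i l \<omega>))"
      using l B2M by (intro integ_ind_fi[where c="\<bar>contv l (-1)\<bar> + \<bar>contv l 1\<bar>"])
        (auto intro: contv_b)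
    show "integrable M (\<lambda>\<omega>. indicator B \<omega> * q l (i l \<omega>))"
      using l BM by (intro integ_ind_q) auto
    fix \<omega>
    show "indicator B2 \<omega> * contv l (i l \<omega>) \<le> indicator B \<omega> * q l (i l \<omega>)"
      using cont_le[OF l(2), of "i l \<omega>"] q_nn[of l "i l \<omega>"] unfolding B2_def
      by (auto simp: indicator_def)
  qed
  finally show ?case unfolding l_def .
qed

end

definition "ths \<omega> = (LEAST m. k \<le> m \<and> q m (i m \<omega>) = 0)"

lemma ths_ex: "k \<le> ths \<omega> \<and> q (ths \<omega>) (i (ths \<omega>) \<omega>) = 0"
  unfolding ths_def by (rule LeastI[of _ T]) (simp add: kT q_T)

lemma ths_le: "k \<le> m \<Longrightarrow> q m (i m \<omega>) = 0 \<Longrightarrow> ths \<omega> \<le> m"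
  unfolding ths_def by (rule Least_le) simp

lemma ths_rng: "\<forall>\<omega>\<in>space M. ths \<omega> \<in> {k..T}"
  using ths_ex ths_le[OF kT] q_T by auto

lemma ths_st: "stopping_time G ths"
proof (rule stopping_timeI)
  fix t
  show "Measurable.pred (G t) (\<lambda>\<omega>. ths \<omega> \<le> t)"
  proof (cases "k \<le> t")
    case False
    then have "{\<omega> \<in> space (G t). ths \<omega> \<le> t} = {}" using ths_ex by (auto intro: order_trans)
    then show ?thesis unfolding Measurable.pred_def by (metis sets.empty_sets)
  next
    case True
    have "{\<omega> \<in> space (G t). ths \<omega> \<le> t} = (\<Union>m\<in>{k..t}. {\<omega> \<in> space M. q m (i m \<omega>) = 0})"
    proof (intro equalityI subsetI)
      fix \<omega> assume "\<omega> \<in> {\<omega> \<in> space (G t). ths \<omega> \<le> t}"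
      then show "\<omega> \<in> (\<Union>m\<in>{k..t}. {\<omega> \<in> space M. q m (i m \<omega>) = 0})"
        using ths_ex[of \<omega>] by (auto simp: Gspace)
    next
      fix \<omega> assume "\<omega> \<in> (\<Union>m\<in>{k..t}. {\<omega> \<in> space M. q m (i m \<omega>) = 0})"
      then show "\<omega> \<in> {\<omega> \<in> space (G t). ths \<omega> \<le> t}"
        using ths_le by (force simp: Gspace)
    qed
    also have "\<dots> \<in> sets (G t)"
      by (intro sets.finite_UN) (auto intro: iset_G)
    finally show ?thesis unfolding Measurable.pred_def .
  qed
qed

lemma lower:
  "d \<le> T - k \<Longrightarrow> B \<in> sets (G (T - d)) \<Longrightarrow> \<forall>\<omega>\<in>B. T - d \<le> ths \<omega> \<Longrightarrow>
   (\<integral>\<omega>. indicator B \<omega> * S ths (T - d) \<omega> \<partial>M) = (\<integral>\<omega>. indicator B \<omega> * q (T - d) (i (T - d) \<omega>) \<partial>M)"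
proof (induction d arbitrary: B)
  case 0
  have "S ths T \<omega> = 0" for \<omega> unfolding S_def by simp
  then show ?case by (simp add: q_T)
next
  case (Suc d)
  note st = ths_st and rng = ths_rng
  define l where "l = T - Suc d"
  have l: "k \<le> l" "l < T" "Suc l = T - d" using Suc.prems(1) unfolding l_def by auto
  have BG: "B \<in> sets (G l)" using Suc.prems(2) l_def by simp
  have Bth: "\<forall>\<omega>\<in>B. l \<le> ths \<omega>" using Suc.prems(3) l_def by simp
  have Bsp: "B \<subseteq> space M" using sets.sets_into_space[OF BG] Gspace by simp
  define B2 where "B2 = B \<inter> {\<omega> \<in> space M. l < ths \<omega>}"
  have B2G: "B2 \<in> sets (G l)" unfolding B2_def by (rule B2_G[OF st rng BG])
  have B2G1: "B2 \<in> sets (G (T - d))" using Gmono[of l "T - d"] B2G l by auto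
  have B2M: "B2 \<in> events" using Gev[OF _ B2G] l by simp
  have BM: "B \<in> events" using Gev[OF _ BG] l by simp
  have B2th: "\<forall>\<omega>\<in>B2. T - d \<le> ths \<omega>" unfolding B2_def using l by auto
  have IH: "(\<integral>\<omega>. indicator B2 \<omega> * S ths (Suc l) \<omega> \<partial>M) = (\<integral>\<omega>. indicator B2 \<omega> * q (Suc l) (i (Suc l) \<omega>) \<partial>M)"
    using Suc.IH[OF _ B2G1 B2th] Suc.prems(1) l(3) by simp
  have "(\<integral>\<omega>. indicator B \<omega> * S ths l \<omega> \<partial>M)
      = (\<integral>\<omega>. indicator B2 \<omega> * hh (i (Suc l) \<omega>) + indicator B2 \<omega> * S ths (Suc l) \<omega> \<partial>M)"
    unfolding B2_def using S_split[OF st rng l(2) Bsp Bth] by simp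
  also have "\<dots> = (\<integral>\<omega>. indicator B2 \<omega> * hh (i (Suc l) \<omega>) \<partial>M) + (\<integral>\<omega>. indicator B2 \<omega> * S ths (Suc l) \<omega> \<partial>M)"
    using l B2M by (intro Bochner_Integration.integral_add integ_ind_hh[OF st rng] integ_ind_S[OF st rng]) auto
  also have "\<dots> = (\<integral>\<omega>. indicator B2 \<omega> * hh (i (Suc l) \<omega>) \<partial>M) + (\<integral>\<omega>. indicator B2 \<omega> * q (Suc l) (i (Suc l) \<omega>) \<partial>M)"
    using IH by simp
  also have "\<dots> = (\<integral>\<omega>. indicator B2 \<omega> * hh (i (Suc l) \<omega>) + indicator B2 \<omega> * q (Suc l) (i (Suc l) \<omega>) \<partial>M)"
    using l B2M by (intro Bochner_Integration.integral_add[symmetric] integ_ind_hh[OF st rng] integ_ind_q[OF st rng]) auto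
  also have "\<dots> = (\<integral>\<omega>. indicator B2 \<omega> * (hh (i (Suc l) \<omega>) + q (Suc l) (i (Suc l) \<omega>)) \<partial>M)"
    by (simp add: distrib_left)
  also have "\<dots> = (\<integral>\<omega>. indicator B2 \<omega> * contv l (i l \<omega>) \<partial>M)"
    by (rule key2[OF l(1,2) B2G])
  also have "\<dots> = (\<integral>\<omega>. indicator B \<omega> * q l (i l \<omega>) \<partial>M)"
  proof (rule Bochner_Integration.integral_cong[OF refl])
    fix \<omega> assume \<omega>: "\<omega> \<in> space M"
    show "indicator B2 \<omega> * contv l (i l \<omega>) = indicator B \<omega> * q l (i l \<omega>)"
    proof (cases "\<omega> \<in> B")
      case False then show ?thesis unfolding B2_def by simp
    next
      case True
      show ?thesis
      proof (cases "l < ths \<omega>")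
        case True2: True
        have "q l (i l \<omega>) \<noteq> 0" using ths_le[OF l(1), of \<omega>] True2 by auto
        then show ?thesis using cont_eq[OF l(2)] True True2 \<omega> unfolding B2_def by simp
      next
        case False
        then have "ths \<omega> = l" using Bth True by force
        then have "q l (i l \<omega>) = 0" using ths_ex[of \<omega>] by simp
        then show ?thesis using False unfolding B2_def by simp
      qed
    qed
  qed
  finally show ?case unfolding l_def .
qed

lemma Q_Fk: "(\<lambda>\<omega>. q k (ik \<omega>)) \<in> borel_measurable Fk"
  using measurable_compose[OF ikmeas, of "q k" borel] by auto

lemma Q_M: "(\<lambda>\<omega>. q k (ik \<omega>)) \<in> borel_measurable M"
  using measurable_from_subalg[OF SA Q_Fk] .

lemma Q_int: "integrable M (\<lambda>\<omega>. q k (ik \<omega>))"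
  by (rule intb[OF Q_M, where c="\<bar>q k (-1)\<bar> + \<bar>q k 1\<bar>"]) (rule q_b)

lemma P_int: "stopping_time G \<theta> \<Longrightarrow> \<forall>\<omega>\<in>space M. \<theta> \<omega> \<in> {k..T} \<Longrightarrow> integrable M (payoff k T i \<theta>)"
  unfolding payoff_S[abs_def] by (rule intb[where c="real T"]) (auto intro: S_meas S_b)

lemma int_Fk:
  assumes st: "stopping_time G \<theta>" and rng: "\<forall>\<omega>\<in>space M. \<theta> \<omega> \<in> {k..T}" and A: "A \<in> sets Fk"
  shows "(\<integral>\<omega>. indicator A \<omega> * payoff k T i \<theta> \<omega> \<partial>M) \<le> (\<integral>\<omega>. indicator A \<omega> * q k (ik \<omega>) \<partial>M)"
    and "\<theta> = ths \<Longrightarrow> (\<integral>\<omega>. indicator A \<omega> * payoff k T i \<theta> \<omega> \<partial>M) = (\<integral>\<omega>. indicator A \<omega> * q k (ik \<omega>) \<partial>M)"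
proof -
  have AG: "A \<in> sets (G (T - (T - k)))" using Fk_G A kT by auto
  have Ath: "\<forall>\<omega>\<in>A. T - (T - k) \<le> \<theta> \<omega>" using rng kT sets.sets_into_space[OF A] spaceFk by auto
  have eq: "(\<integral>\<omega>. indicator A \<omega> * q k (i k \<omega>) \<partial>M) = (\<integral>\<omega>. indicator A \<omega> * q k (ik \<omega>) \<partial>M)"
    by (rule Bochner_Integration.integral_cong[OF refl]) (simp add: i_k)
  show "(\<integral>\<omega>. indicator A \<omega> * payoff k T i \<theta> \<omega> \<partial>M) \<le> (\<integral>\<omega>. indicator A \<omega> * q k (ik \<omega>) \<partial>M)"
    using upper[OF st rng _ AG Ath] kT eq unfolding payoff_S by simp
  assume th: "\<theta> = ths"
  show "(\<integral>\<omega>. indicator A \<omega> * payoff k T i \<theta> \<omega> \<partial>M) = (\<integral>\<omega>. indicator A \<omega> * q k (ik \<omega>) \<partial>M)"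
    using lower[OF _ AG Ath[unfolded th]] kT eq unfolding payoff_S th by simp
qed

theorem main: "is_ess_sup M
           (\<lambda>\<theta>. real_cond_exp M Fk (payoff k T i \<theta>))
           {\<theta>. stopping_time G \<theta> \<and> (\<forall>\<omega>\<in>space M. \<theta> \<omega> \<in> {k..T})}
           (\<lambda>\<omega>. q k (ik \<omega>))"
proof -
  interpret FS: finite_measure_subalgebra M Fk by unfold_locales (rule SA)
  let ?Q = "\<lambda>\<omega>. q k (ik \<omega>)"
  have up: "AE \<omega> in M. real_cond_exp M Fk (payoff k T i \<theta>) \<omega> \<le> ?Q \<omega>"
    if st: "stopping_time G \<theta>" and rng: "\<forall>\<omega>\<in>space M. \<theta> \<omega> \<in> {k..T}" for \<theta>
  proof -
    let ?Z = "real_cond_exp M Fk (payoff k T i \<theta>)"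
    have Pi: "integrable M (payoff k T i \<theta>)" by (rule P_int[OF st rng])
    have Zi: "integrable M ?Z" by (rule FS.real_cond_exp_int(1)[OF Pi])
    have ZF: "?Z \<in> borel_measurable Fk" by (rule borel_measurable_cond_exp)
    define A where "A = {\<omega> \<in> space Fk. ?Q \<omega> < ?Z \<omega>}"
    have AF: "A \<in> sets Fk" unfolding A_def using ZF Q_Fk by measurable
    have AM: "A \<in> events" using AF setsFk by auto
    have "(\<integral>\<omega>. indicator A \<omega> * ?Z \<omega> \<partial>M) = (\<integral>\<omega>. indicator A \<omega> * payoff k T i \<theta> \<omega> \<partial>M)"
      using FS.real_cond_exp_intA[OF Pi AF] unfolding set_lebesgue_integral_def by simp
    also have "\<dots> \<le> (\<integral>\<omega>. indicator A \<omega> * ?Q \<omega> \<partial>M)" by (rule int_Fk(1)[OF st rng AF])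
    finally have le: "(\<integral>\<omega>. indicator A \<omega> * ?Z \<omega> \<partial>M) \<le> (\<integral>\<omega>. indicator A \<omega> * ?Q \<omega> \<partial>M)" .
    have i1: "integrable M (\<lambda>\<omega>. indicator A \<omega> * ?Z \<omega>)"
      by (subst mult.commute) (rule integrable_real_mult_indicator[OF AM Zi])
    have i2: "integrable M (\<lambda>\<omega>. indicator A \<omega> * ?Q \<omega>)"
      by (subst mult.commute) (rule integrable_real_mult_indicator[OF AM Q_int])
    have i3: "integrable M (\<lambda>\<omega>. indicator A \<omega> * (?Z \<omega> - ?Q \<omega>))"
      using Bochner_Integration.integrable_diff[OF i1 i2] by (simp add: right_diff_distrib)
    have nn: "AE \<omega> in M. 0 \<le> indicator A \<omega> * (?Z \<omega> - ?Q \<omega>)"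
      unfolding A_def by (auto simp: indicator_def)
    have "(\<integral>\<omega>. indicator A \<omega> * (?Z \<omega> - ?Q \<omega>) \<partial>M)
        = (\<integral>\<omega>. indicator A \<omega> * ?Z \<omega> \<partial>M) - (\<integral>\<omega>. indicator A \<omega> * ?Q \<omega> \<partial>M)"
      using Bochner_Integration.integral_diff[OF i1 i2] by (simp add: right_diff_distrib)
    also have "\<dots> \<le> 0" using le by simp
    finally have "(\<integral>\<omega>. indicator A \<omega> * (?Z \<omega> - ?Q \<omega>) \<partial>M) \<le> 0" .
    moreover have "(\<integral>\<omega>. indicator A \<omega> * (?Z \<omega> - ?Q \<omega>) \<partial>M) \<ge> 0"
      using nn by (rule integral_nonneg_AE)
    ultimately have "(\<integral>\<omega>. indicator A \<omega> * (?Z \<omega> - ?Q \<omega>) \<partial>M) = 0" by simp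
    then have "AE \<omega> in M. indicator A \<omega> * (?Z \<omega> - ?Q \<omega>) = 0"
      using integral_nonneg_eq_0_iff_AE[OF i3 nn] by simp
    then show ?thesis
    proof (rule AE_mp, intro AE_I2 impI)
      fix \<omega> assume \<omega>: "\<omega> \<in> space M" "indicator A \<omega> * (?Z \<omega> - ?Q \<omega>) = 0"
      show "?Z \<omega> \<le> ?Q \<omega>"
      proof (rule ccontr)
        assume "\<not> ?Z \<omega> \<le> ?Q \<omega>"
        then have "\<omega> \<in> A" unfolding A_def using \<omega>(1) spaceFk by auto
        then show False using \<omega>(2) \<open>\<not> ?Z \<omega> \<le> ?Q \<omega>\<close> by simp
      qed
    qed
  qed
  have opt: "AE \<omega> in M. real_cond_exp M Fk (payoff k T i ths) \<omega> = ?Q \<omega>"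
  proof (rule FS.real_cond_exp_charact)
    fix A assume AF: "A \<in> sets Fk"
    show "(\<integral>\<omega>\<in>A. payoff k T i ths \<omega> \<partial>M) = (\<integral>\<omega>\<in>A. ?Q \<omega> \<partial>M)"
      using int_Fk(2)[OF ths_st ths_rng AF refl] unfolding set_lebesgue_integral_def by simp
  qed (auto intro: P_int[OF ths_st ths_rng] Q_int Q_Fk)
  show ?thesis unfolding is_ess_sup_def
  proof (intro conjI ballI allI impI)
    show "?Q \<in> borel_measurable M" by (rule Q_M)
  next
    fix \<theta> assume "\<theta> \<in> {\<theta>. stopping_time G \<theta> \<and> (\<forall>\<omega>\<in>space M. \<theta> \<omega> \<in> {k..T})}"
    then show "AE \<omega> in M. real_cond_exp M Fk (payoff k T i \<theta>) \<omega> \<le> ?Q \<omega>" using up by auto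
  next
    fix Y :: "'a \<Rightarrow> real"
    assume "\<forall>\<theta>\<in>{\<theta>. stopping_time G \<theta> \<and> (\<forall>\<omega>\<in>space M. \<theta> \<omega> \<in> {k..T})}.
              AE \<omega> in M. real_cond_exp M Fk (payoff k T i \<theta>) \<omega> \<le> Y \<omega>"
    then have "AE \<omega> in M. real_cond_exp M Fk (payoff k T i ths) \<omega> \<le> Y \<omega>"
      using ths_st ths_rng by auto
    with opt show "AE \<omega> in M. ?Q \<omega> \<le> Y \<omega>" by eventually_elim simp
  qed
qed

end
theorem lemma5p4:
  fixes M :: "'a measure" and Fk :: "'a measure" and k T :: nat
    and \<nu> :: "nat \<Rightarrow> real" and n :: "nat \<Rightarrow> 'a \<Rightarrow> int" and ik :: "'a \<Rightarrow> int"
  assumes "prob_space M"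
    and "subalgebra M Fk"
    and "k \<le> T"
    and "\<And>l. k \<le> l \<Longrightarrow> l < T \<Longrightarrow> \<nu> l \<ge> 0"
    and "\<And>l. k \<le> l \<Longrightarrow> l \<le> T \<Longrightarrow> n l \<in> measurable M (count_space UNIV)"
    and "\<And>\<omega>. \<omega> \<in> space M \<Longrightarrow> n k \<omega> = 0"
    and "\<And>l j. k \<le> l \<Longrightarrow> l < T \<Longrightarrow>
           measure M {\<omega> \<in> space M. n (Suc l) \<omega> - n l \<omega> = int j}
             = \<nu> l ^ j / fact j * exp (- \<nu> l)"
    and "prob_space.indep_sets M
           (\<lambda>j. case j of None \<Rightarrow> sets Fk
                 | Some l \<Rightarrow> {(\<lambda>\<omega>. n (Suc l) \<omega> - n l \<omega>) -` A \<inter> space M | A. A \<subseteq> (UNIV :: int set)})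
           (insert None (Some ` {k..<T}))"
    and "ik \<in> measurable Fk (count_space UNIV)"
    and "\<And>\<omega>. \<omega> \<in> space M \<Longrightarrow> ik \<omega> \<in> {-1, 1}"
  shows "is_ess_sup M
           (\<lambda>\<theta>. real_cond_exp M Fk (payoff k T (regime ik n) \<theta>))
           {\<theta>. stopping_time (gen_filt M Fk k (regime ik n)) \<theta>
                \<and> (\<forall>\<omega>\<in>space M. \<theta> \<omega> \<in> {k..T})}
           (\<lambda>\<omega>. qfun \<nu> T k (ik \<omega>))"
proof -
  have "RA M Fk k T \<nu> n ik"
    unfolding RA_def RA_axioms_def using assms by auto
  then interpret R: RA M Fk k T \<nu> n ik .
  show ?thesis by (rule R.main)
qed

end
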